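(* Let $H \subset L$ be light-cone regular and let $h_1, \ldots, h_m \in L$. Then for every sufficiently large integer $\ell > 0$ we have $h_1, \ldots, h_m \in H + \ell v_N = \{ h + \ell v_N \mid h \in H \}$.
   Context: Let $L$ be a finitely generated $\mathbb{Z}$-module and $v_1,\dots,v_N\in L$ distinct elements which generate $L$ as a $\mathbb{Z}$-module and are linearly independent over $\mathbb{Z}_{\ge 0}$ (i.e. $\sum_i a_i v_i=0$ with all $a_i\in\mathbb{Z}_{\ge0}$ forces all $a_i=0$). Let $S=\{\sum_i a_iv_i : a_i\in\mathbb{Z}_{\ge0}\}$ and define the partial order $h_1\le h_2$ iff $h_1-h_2\in S$. Assume $v_N$ is the minimum of $\{0,v_1,\dots,v_N\}$ with respect to $\le$. A nonempty subset $H\subset L$ is light-cone regular if for every $h\in H$ the set $\{h'\in H: h'\le h\}$ is finite and $\{h'\in L: h'\ge h\}\subset H$. *)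

theory Defs
  imports Main
begin

definition nsmul :: "nat \<Rightarrow> 'a::comm_monoid_add \<Rightarrow> 'a" where
  "nsmul n x = (\<Sum>_\<in>{..<n}. x)"

definition zsmul :: "int \<Rightarrow> 'a::ab_group_add \<Rightarrow> 'a" where
  "zsmul k x = (if k \<ge> 0 then nsmul (nat k) x else - nsmul (nat (- k)) x)"

definition semigrp :: "nat \<Rightarrow> (nat \<Rightarrow> 'a::ab_group_add) \<Rightarrow> 'a set" where
  "semigrp N v = {(\<Sum>i=1..N. nsmul (a i) (v i)) | a. True}"

definition sleq :: "nat \<Rightarrow> (nat \<Rightarrow> 'a::ab_group_add) \<Rightarrow> 'a \<Rightarrow> 'a \<Rightarrow> bool" where
  "sleq N v h1 h2 \<longleftrightarrow> h1 - h2 \<in> semigrp N v"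

definition light_cone_regular :: "nat \<Rightarrow> (nat \<Rightarrow> 'a::ab_group_add) \<Rightarrow> 'a set \<Rightarrow> bool" where
  "light_cone_regular N v H \<longleftrightarrow> H \<noteq> {} \<and>
     (\<forall>h\<in>H. finite {h'\<in>H. sleq N v h' h} \<and> {h'. sleq N v h h'} \<subseteq> H)"

end

theory Submission
  imports Defs
begin

lemma nsmul_0[simp]: "nsmul 0 x = 0" by (simp add: nsmul_def)
lemma nsmul_Suc[simp]: "nsmul (Suc n) x = x + nsmul n x"
  by (simp add: nsmul_def add.commute)
lemma nsmul_add: "nsmul (m+n) x = nsmul m x + nsmul n x"
  by (induction m) (simp_all add: add.assoc)
lemma nsmul_diff: "nsmul n (x - y) = nsmul n x - nsmul n (y::'a::ab_group_add)"
  by (induction n) (simp_all add: algebra_simps)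
lemma nsmul_neg: "nsmul n (- y) = - nsmul n (y::'a::ab_group_add)"
  by (induction n) (simp_all add: algebra_simps)
lemma nsmul_zero[simp]: "nsmul n (0::'a::comm_monoid_add) = 0"
  by (induction n) simp_all
lemma nsmul_plus: "nsmul n (x + y) = nsmul n x + nsmul n (y::'a::ab_group_add)"
  by (induction n) (simp_all add: algebra_simps)

lemma S_zero: "0 \<in> semigrp N v"
  unfolding semigrp_def by (rule CollectI, rule exI[of _ "\<lambda>_. 0"]) simp

lemma S_add: "x \<in> semigrp N v \<Longrightarrow> y \<in> semigrp N v \<Longrightarrow> x + y \<in> semigrp N v"
proof -
  assume "x \<in> semigrp N v" "y \<in> semigrp N v"
  then obtain a b where "x = (\<Sum>i=1..N. nsmul (a i) (v i))" "y = (\<Sum>i=1..N. nsmul (b i) (v i))"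
    unfolding semigrp_def by blast
  then have "x + y = (\<Sum>i=1..N. nsmul (a i + b i) (v i))"
    by (simp add: nsmul_add sum.distrib)
  then show ?thesis unfolding semigrp_def by (intro CollectI exI[of _ "\<lambda>i. a i + b i"]) simp
qed

lemma S_nsmul: "x \<in> semigrp N v \<Longrightarrow> nsmul n x \<in> semigrp N v"
proof (induction n)
  case 0
  then show ?case using S_zero by simp
next
  case (Suc n)
  then show ?case using S_add by fastforce
qed

lemma S_v: "i \<in> {1..N} \<Longrightarrow> v i \<in> semigrp N v"
proof -
  assume i: "i \<in> {1..N}"
  have "(\<Sum>j=1..N. nsmul (if j = i then 1 else 0) (v j)) = (\<Sum>j=1..N. if j = i then v i else 0)"
    by (rule sum.cong) auto
  also have "\<dots> = v i" using i by simp
  finally show ?thesis unfolding semigrp_def by (intro CollectI exI[of _ "\<lambda>j. if j = i then 1 else 0"]) simp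
qed

theorem lemma3p2:
  fixes v :: "nat \<Rightarrow> 'a::ab_group_add" and N :: nat
    and H :: "'a set" and hs :: "'a list"
  assumes N_pos: "N \<ge> 1"
    and distinct: "inj_on v {1..N}"
    and generate: "\<forall>x. \<exists>c::nat \<Rightarrow> int. x = (\<Sum>i=1..N. zsmul (c i) (v i))"
    and pos_indep: "\<forall>a::nat \<Rightarrow> nat. (\<Sum>i=1..N. nsmul (a i) (v i)) = 0 \<longrightarrow> (\<forall>i\<in>{1..N}. a i = 0)"
    and vN_min: "sleq N v (v N) 0 \<and> (\<forall>i\<in>{1..N}. sleq N v (v N) (v i))"
    and H: "light_cone_regular N v H"
  shows "\<exists>l0::nat. \<forall>l::nat. l \<ge> l0 \<and> l > 0 \<longrightarrow>
           set hs \<subseteq> {h + nsmul l (v N) | h. h \<in> H}"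
proof -
  let ?S = "semigrp N v"
  have vN: "v N \<in> ?S" using vN_min by (simp add: sleq_def)
  have si: "v N - v i \<in> ?S" if "i \<in> {1..N}" for i using vN_min that by (simp add: sleq_def)
  have trm: "\<exists>k s. s \<in> ?S \<and> zsmul c (v i) = s - nsmul k (v N)" if "i \<in> {1..N}" for c i
  proof (cases "c \<ge> 0")
    case True
    then show ?thesis using S_nsmul[OF S_v[OF that]]
      by (intro exI[of _ 0] exI[of _ "nsmul (nat c) (v i)"]) (simp add: zsmul_def)
  next
    case False
    have "zsmul c (v i) = nsmul (nat (-c)) (v N - v i) - nsmul (nat (-c)) (v N)"
      using False by (simp add: zsmul_def nsmul_diff)
    then show ?thesis using S_nsmul[OF si[OF that]] by blast
  qed
  have sumA: "\<exists>k s. s \<in> ?S \<and> (\<Sum>i\<in>A. zsmul (c i) (v i)) = s - nsmul k (v N)"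
    if "A \<subseteq> {1..N}" for A c
  proof -
    have "finite A" using that finite_subset by blast
    then show ?thesis using that
    proof (induction A rule: finite_induct)
      case empty
      then show ?case using S_zero by (intro exI[of _ 0] exI[of _ 0]) simp
    next
      case (insert a F)
      then obtain k s where ks: "s \<in> ?S" "(\<Sum>i\<in>F. zsmul (c i) (v i)) = s - nsmul k (v N)" by auto
      obtain k' s' where ks': "s' \<in> ?S" "zsmul (c a) (v a) = s' - nsmul k' (v N)"
        using trm insert by blast
      have "(\<Sum>i\<in>insert a F. zsmul (c i) (v i)) = (s' + s) - nsmul (k' + k) (v N)"
        using insert ks ks' by (simp add: nsmul_add algebra_simps)
      then show ?case using S_add[OF ks'(1) ks(1)] by blast
    qed
  qed
  obtain h0 where h0: "h0 \<in> H" using H by (auto simp: light_cone_regular_def)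
  have up: "{h'. sleq N v h0 h'} \<subseteq> H" using H h0 by (auto simp: light_cone_regular_def)
  have each: "\<exists>k. \<forall>l\<ge>k. x - nsmul l (v N) \<in> H" for x
  proof -
    obtain c where "h0 - x = (\<Sum>i=1..N. zsmul (c i) (v i))" using generate by blast
    then obtain k s where ks: "s \<in> ?S" "h0 - x = s - nsmul k (v N)" using sumA[of "{1..N}" c] by auto
    have "x - nsmul l (v N) \<in> H" if "l \<ge> k" for l
    proof -
      obtain d where d: "l = k + d" using \<open>l \<ge> k\<close> le_Suc_ex by blast
      have "h0 - (x - nsmul l (v N)) = s + nsmul d (v N)"
        using ks(2) d by (simp add: nsmul_add algebra_simps)
      then have "sleq N v h0 (x - nsmul l (v N))"
        using S_add[OF ks(1) S_nsmul[OF vN]] by (simp add: sleq_def)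
      then show ?thesis using up by blast
    qed
    then show ?thesis by blast
  qed
  then obtain K where K: "\<And>x l. l \<ge> K x \<Longrightarrow> x - nsmul l (v N) \<in> H" by metis
  show ?thesis
  proof (intro exI[of _ "Max (insert 0 (K ` set hs))"] allI impI subsetI)
    fix l x assume l: "Max (insert 0 (K ` set hs)) \<le> l \<and> 0 < l" and x: "x \<in> set hs"
    have "K x \<le> Max (insert 0 (K ` set hs))" using x by simp
    then have "x - nsmul l (v N) \<in> H" using l K[of x l] by linarith
    then show "x \<in> {h + nsmul l (v N) | h. h \<in> H}"
      by (intro CollectI exI[of _ "x - nsmul l (v N)"]) simp
  qed
qed

end
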